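(* Let $X=\mathbb{P}^{n_1}\times\dots\times\mathbb{P}^{n_\ell}$ over an algebraically closed field $k$ of characteristic zero with $\ell\ge3$ (and all $n_i\geq 1$). Then the ample line bundle $\mathcal{O}_X(1,1,\dots,1)$ is not determinantally presented.
   Context: $\mathcal{O}_X(\mathbf{m})$ denotes $\mathcal{O}_{\mathbb{P}^{n_1}}(m_1)\boxtimes\cdots\boxtimes\mathcal{O}_{\mathbb{P}^{n_\ell}}(m_\ell)$. A matrix of linear forms $\Omega$ is $1$-generic if $P\Omega Q$ has no zero entry for all invertible $P,Q$ over $k$. A line bundle $L$ is determinantally presented if its complete linear series embeds $X$ in $\mathbb{P}(H^0(X,L))$ and the homogeneous ideal of $X$ there is generated by the $2\times2$ minors of a $1$-generic matrix of linear forms. *)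

theory Defs
  imports "HOL-Library.Poly_Mapping" "HOL-Computational_Algebra.Polynomial"
begin

text \<open>Multivariate polynomials over a field 'k in variables indexed by nat lists
  (a variable x_j, j = [j_1,...,j_l], is a coordinate of P(V_1 (x) ... (x) V_l)).\<close>
type_synonym 'k mpoly = "(nat list \<Rightarrow>\<^sub>0 nat) \<Rightarrow>\<^sub>0 'k"

definition mpoly_eval :: "(nat list \<Rightarrow> 'k::comm_ring_1) \<Rightarrow> 'k mpoly \<Rightarrow> 'k" where
  "mpoly_eval a p =
     (\<Sum>m\<in>Poly_Mapping.keys p. Poly_Mapping.lookup p m * (\<Prod>v\<in>Poly_Mapping.keys m. a v ^ Poly_Mapping.lookup m v))"

definition mpoly_const :: "'k::zero \<Rightarrow> 'k mpoly" where
  "mpoly_const c = Poly_Mapping.single 0 c"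

definition vars_in :: "nat list set \<Rightarrow> 'k::zero mpoly \<Rightarrow> bool" where
  "vars_in J p \<longleftrightarrow> (\<forall>m\<in>Poly_Mapping.keys p. Poly_Mapping.keys m \<subseteq> J)"

definition is_linear_form :: "nat list set \<Rightarrow> 'k::zero mpoly \<Rightarrow> bool" where
  "is_linear_form J p \<longleftrightarrow> (\<forall>m\<in>Poly_Mapping.keys p. \<exists>v\<in>J. m = Poly_Mapping.single v 1)"

text \<open>index set of the homogeneous coordinates of P(H^0(X, O_X(1,...,1))),
  X = P^{n_0} x ... x P^{n_{l-1}}: tuples (j_0,...,j_{l-1}) with 0 <= j_i <= n_i\<close>
definition segre_index :: "nat \<Rightarrow> (nat \<Rightarrow> nat) \<Rightarrow> nat list set" where
  "segre_index l n = {j. length j = l \<and> (\<forall>i<l. j ! i \<le> n i)}"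

text \<open>point of the affine cone over the image of X under the complete linear series
  of O_X(1,...,1) (Segre map): x_j = prod_i y_i(j_i)\<close>
definition segre_point :: "nat \<Rightarrow> (nat \<Rightarrow> nat \<Rightarrow> 'k::comm_ring_1) \<Rightarrow> nat list \<Rightarrow> 'k" where
  "segre_point l y = (\<lambda>j. \<Prod>i<l. y i (j ! i))"

text \<open>homogeneous ideal of X in P(H^0(X,O_X(1,...,1)))\<close>
definition segre_ideal :: "nat \<Rightarrow> (nat \<Rightarrow> nat) \<Rightarrow> 'k::comm_ring_1 mpoly set" where
  "segre_ideal l n = {p. vars_in (segre_index l n) p \<and>
                         (\<forall>y. mpoly_eval (segre_point l y) p = 0)}"

definition gen_ideal :: "'a::comm_ring_1 set \<Rightarrow> 'a set \<Rightarrow> 'a set" where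
  "gen_ideal R G = {p. \<exists>F c. finite F \<and> F \<subseteq> G \<and> (\<forall>g\<in>F. c g \<in> R) \<and> p = (\<Sum>g\<in>F. c g * g)}"

definition invertible_mat :: "nat \<Rightarrow> (nat \<Rightarrow> nat \<Rightarrow> 'k::comm_ring_1) \<Rightarrow> bool" where
  "invertible_mat r P \<longleftrightarrow> (\<exists>P'. \<forall>a<r. \<forall>b<r.
      (\<Sum>c<r. P a c * P' c b) = (if a = b then 1 else 0) \<and>
      (\<Sum>c<r. P' a c * P c b) = (if a = b then 1 else 0))"

definition one_generic :: "nat \<Rightarrow> nat \<Rightarrow> (nat \<Rightarrow> nat \<Rightarrow> 'k::comm_ring_1 mpoly) \<Rightarrow> bool" where
  "one_generic r s \<Omega> \<longleftrightarrow> (\<forall>P Q. invertible_mat r P \<and> invertible_mat s Q \<longrightarrow>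
      (\<forall>a<r. \<forall>b<s. (\<Sum>c<r. \<Sum>d<s. mpoly_const (P a c) * \<Omega> c d * mpoly_const (Q d b)) \<noteq> 0))"

definition minors2 :: "nat \<Rightarrow> nat \<Rightarrow> (nat \<Rightarrow> nat \<Rightarrow> 'a::comm_ring_1) \<Rightarrow> 'a set" where
  "minors2 r s \<Omega> = {\<Omega> a c * \<Omega> b d - \<Omega> a d * \<Omega> b c | a b c d. a < b \<and> b < r \<and> c < d \<and> d < s}"

definition determinantal_presentation ::
    "nat \<Rightarrow> (nat \<Rightarrow> nat) \<Rightarrow> nat \<Rightarrow> nat \<Rightarrow> (nat \<Rightarrow> nat \<Rightarrow> 'k::comm_ring_1 mpoly) \<Rightarrow> bool" where
  "determinantal_presentation l n r s \<Omega> \<longleftrightarrow>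
     (\<forall>a<r. \<forall>b<s. is_linear_form (segre_index l n) (\<Omega> a b)) \<and>
     one_generic r s \<Omega> \<and>
     gen_ideal {p. vars_in (segre_index l n) p} (minors2 r s \<Omega>) = segre_ideal l n"

end

theory Submission
  imports Defs
begin

definition mmono :: "(nat list \<Rightarrow> 'k::comm_ring_1) \<Rightarrow> (nat list \<Rightarrow>\<^sub>0 nat) \<Rightarrow> 'k" where
  "mmono a m = (\<Prod>v\<in>Poly_Mapping.keys m. a v ^ Poly_Mapping.lookup m v)"

lemma mono_superset:
  assumes "finite K" "Poly_Mapping.keys m \<subseteq> K"
  shows "mmono a m = (\<Prod>v\<in>K. a v ^ Poly_Mapping.lookup m v)"
  unfolding mmono_def
  by (rule prod.mono_neutral_left[OF assms(1) assms(2)]) (auto simp: in_keys_iff)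

lemma mono_add: "mmono a (m1 + m2) = mmono a m1 * mmono a m2"
proof -
  let ?K = "Poly_Mapping.keys m1 \<union> Poly_Mapping.keys m2"
  have f: "finite ?K" by simp
  have "mmono a (m1 + m2) = (\<Prod>v\<in>?K. a v ^ Poly_Mapping.lookup (m1+m2) v)"
    by (rule mono_superset[OF f]) (rule keys_add)
  also have "\<dots> = (\<Prod>v\<in>?K. a v ^ Poly_Mapping.lookup m1 v * a v ^ Poly_Mapping.lookup m2 v)"
    by (simp add: lookup_add power_add)
  also have "\<dots> = mmono a m1 * mmono a m2"
    by (simp add: prod.distrib mono_superset[OF f])
  finally show ?thesis .
qed

lemma mono_zero[simp]: "mmono a 0 = 1" by (simp add: mmono_def)

lemma mono_single1[simp]: "mmono a (Poly_Mapping.single v (Suc 0)) = a v"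
  by (simp add: mmono_def)

lemma mono_single1'[simp]: "mmono a (Poly_Mapping.single v 1) = a v"
  by (simp add: mmono_def)

lemma ev_def2: "mpoly_eval a p = (\<Sum>m\<in>Poly_Mapping.keys p. Poly_Mapping.lookup p m * mmono a m)"
  by (simp add: mpoly_eval_def mmono_def)

lemma ev_zero[simp]: "mpoly_eval a 0 = 0" by (simp add: mpoly_eval_def)

lemma ev_add: "mpoly_eval a (p + q) = mpoly_eval a p + mpoly_eval a q"
  unfolding ev_def2
  by (rule setsum_keys_plus_distrib) (auto simp: distrib_right)

lemma ev_single: "mpoly_eval a (Poly_Mapping.single m c) = c * mmono a m"
  by (simp add: ev_def2)

lemma ev_sum: "mpoly_eval a (sum f A) = (\<Sum>x\<in>A. mpoly_eval a (f x))"
  by (induction A rule: infinite_finite_induct) (auto simp: ev_add)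

lemma ev_uminus: "mpoly_eval a (- p) = - mpoly_eval a p"
  by (simp add: ev_def2 sum_negf)

lemma ev_diff: "mpoly_eval a (p - q) = mpoly_eval a p - mpoly_eval a q"
  unfolding diff_conv_add_uminus[of p q] ev_add ev_uminus by simp

lemma poly_expand: "p = (\<Sum>m\<in>Poly_Mapping.keys p. Poly_Mapping.single m (Poly_Mapping.lookup p m))"
  by (rule poly_mapping_eqI) (auto simp: lookup_sum lookup_single when_def in_keys_iff
       sum.delta[OF finite_keys] )

lemma ev_mult: "mpoly_eval a (p * q) = mpoly_eval a p * mpoly_eval a q"
proof -
  have "p * q = (\<Sum>m\<in>Poly_Mapping.keys p. Poly_Mapping.single m (Poly_Mapping.lookup p m)) *
                (\<Sum>m'\<in>Poly_Mapping.keys q. Poly_Mapping.single m' (Poly_Mapping.lookup q m'))"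
    using poly_expand[of p] poly_expand[of q] by simp
  also have "\<dots> = (\<Sum>m\<in>Poly_Mapping.keys p. \<Sum>m'\<in>Poly_Mapping.keys q.
        Poly_Mapping.single (m + m') (Poly_Mapping.lookup p m * Poly_Mapping.lookup q m'))"
    apply (simp add: sum_distrib_left sum_distrib_right mult_single)
    by (rule sum.swap)
  finally have "mpoly_eval a (p*q) = (\<Sum>m\<in>Poly_Mapping.keys p. \<Sum>m'\<in>Poly_Mapping.keys q.
        Poly_Mapping.lookup p m * Poly_Mapping.lookup q m' * (mmono a m * mmono a m'))"
    by (simp add: ev_sum ev_single mono_add)
  also have "\<dots> = (\<Sum>m\<in>Poly_Mapping.keys p. \<Sum>m'\<in>Poly_Mapping.keys q.
        (Poly_Mapping.lookup p m * mmono a m) * (Poly_Mapping.lookup q m' * mmono a m'))"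
    by (simp add: mult_ac)
  also have "\<dots> = mpoly_eval a p * mpoly_eval a q"
    by (simp add: ev_def2 sum_product)
  finally show ?thesis .
qed

lemma ev_linear:
  assumes "is_linear_form J p"
  shows "mpoly_eval (\<lambda>j. a j + b j) p = mpoly_eval a p + mpoly_eval b p"
proof -
  have "mpoly_eval (\<lambda>j. a j + b j) p = (\<Sum>m\<in>Poly_Mapping.keys p.
          Poly_Mapping.lookup p m * mmono a m + Poly_Mapping.lookup p m * mmono b m)"
    unfolding ev_def2
  proof (rule sum.cong)
    fix m assume "m \<in> Poly_Mapping.keys p"
    then obtain v where "m = Poly_Mapping.single v 1" using assms unfolding is_linear_form_def by blast
    then show "Poly_Mapping.lookup p m * mmono (\<lambda>j. a j + b j) m =
          Poly_Mapping.lookup p m * mmono a m + Poly_Mapping.lookup p m * mmono b m"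
      by (simp add: distrib_left)
  qed simp
  then show ?thesis by (simp add: ev_def2 sum.distrib)
qed

definition Xv :: "nat list \<Rightarrow> 'k::comm_ring_1 mpoly" where
  "Xv j = Poly_Mapping.single (Poly_Mapping.single j 1) 1"

lemma ev_Xv[simp]: "mpoly_eval a (Xv j) = a j"
  by (simp add: Xv_def ev_single)

lemma keys_diff_sub: "Poly_Mapping.keys (p - q) \<subseteq> Poly_Mapping.keys p \<union> Poly_Mapping.keys (q::'a \<Rightarrow>\<^sub>0 'b::ab_group_add)"
  using keys_add[of p "-q"] unfolding diff_conv_add_uminus[of p q] keys_minus .

lemma vars_in_diff: "vars_in J p \<Longrightarrow> vars_in J q \<Longrightarrow> vars_in J (p - (q :: 'k::comm_ring_1 mpoly))"
  unfolding vars_in_def using keys_diff_sub[of p q] by blast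

lemma vars_in_mult: "vars_in J p \<Longrightarrow> vars_in J q \<Longrightarrow> vars_in J (p * (q :: 'k::comm_ring_1 mpoly))"
  unfolding vars_in_def
proof
  fix m assume p: "\<forall>m\<in>Poly_Mapping.keys p. Poly_Mapping.keys m \<subseteq> J"
    and q: "\<forall>m\<in>Poly_Mapping.keys q. Poly_Mapping.keys m \<subseteq> J"
    and m: "m \<in> Poly_Mapping.keys (p * q)"
  then obtain a b where "m = a + b" "a \<in> Poly_Mapping.keys p" "b \<in> Poly_Mapping.keys q"
    using keys_mult[of p q] by blast
  then show "Poly_Mapping.keys m \<subseteq> J" using p q keys_add[of a b] by blast
qed

lemma vars_in_Xv: "j \<in> J \<Longrightarrow> vars_in J (Xv j :: 'k::comm_ring_1 mpoly)"
  by (simp add: vars_in_def Xv_def)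

lemma vars_in_one: "vars_in J (1 :: 'k::comm_ring_1 mpoly)"
  by (simp add: vars_in_def)

lemma sp_idx:
  assumes "l = Suc (Suc (Suc l'))"
  shows "segre_point l y (c0 # c1 # c2 # replicate l' 0) =
     y 0 c0 * y 1 c1 * y 2 c2 * (\<Prod>i<l'. y (Suc (Suc (Suc i))) 0)"
proof -
  have "(\<Prod>i<l'. y (Suc (Suc (Suc i))) ((c0 # c1 # c2 # replicate l' 0) ! Suc (Suc (Suc i)))) =
        (\<Prod>i<l'. y (Suc (Suc (Suc i))) 0)"
    by (rule prod.cong) auto
  then show ?thesis
    unfolding segre_point_def assms by (simp only: prod.lessThan_Suc_shift) (simp add: mult_ac numeral_2_eq_2)
qed

lemma sp_add:
  assumes "i < l"
  shows "segre_point l (y(i := f)) j + segre_point l (y(i := g)) j =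
         segre_point l (y(i := (\<lambda>t. f t + g t))) j"
proof -
  have *: "\<And>h. segre_point l (y(i := h)) j = h (j ! i) * (\<Prod>x\<in>{..<l}-{i}. y x (j ! x))"
  proof -
    fix h
    have "segre_point l (y(i := h)) j = (y(i := h)) i (j ! i) * (\<Prod>x\<in>{..<l}-{i}. (y(i := h)) x (j ! x))"
      unfolding segre_point_def using assms by (subst prod.remove[of _ i]) auto
    also have "(\<Prod>x\<in>{..<l}-{i}. (y(i := h)) x (j ! x)) = (\<Prod>x\<in>{..<l}-{i}. y x (j ! x))"
      by (rule prod.cong) auto
    finally show "segre_point l (y(i := h)) j = h (j ! i) * (\<Prod>x\<in>{..<l}-{i}. y x (j ! x))"
      by (simp only: fun_upd_same)
  qed
  show ?thesis unfolding * by (simp add: distrib_right)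
qed

definition Yp :: "(nat \<Rightarrow> nat) \<Rightarrow> nat \<Rightarrow> nat \<Rightarrow> 'k::comm_ring_1" where
  "Yp \<beta> i t = (if t = \<beta> i then 1 else 0)"

lemma sp_rem: "i < l \<Longrightarrow> segre_point l y j = y i (j ! i) * (\<Prod>x\<in>{..<l}-{i}. y x (j ! x))"
  unfolding segre_point_def by (subst prod.remove[of _ i]) auto

lemma pt_pair:
  assumes "i < l" "\<And>x. x \<noteq> i \<Longrightarrow> \<beta> x = \<beta>' x"
  shows "\<exists>y. \<forall>j. segre_point l (Yp \<beta> :: nat \<Rightarrow> nat \<Rightarrow> 'k::comm_ring_1) j + segre_point l (Yp \<beta>') j = segre_point l y j"
proof (rule exI[of _ "(Yp \<beta>)(i := (\<lambda>t. Yp \<beta> i t + Yp \<beta>' i t))"], rule allI)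
  fix j
  have p: "(\<Prod>x\<in>{..<l}-{i}. (Yp \<beta>' :: nat \<Rightarrow> nat \<Rightarrow> 'k) x (j ! x)) = (\<Prod>x\<in>{..<l}-{i}. Yp \<beta> x (j ! x))"
    by (rule prod.cong) (auto simp: Yp_def assms(2))
  have q: "(\<Prod>x\<in>{..<l}-{i}. ((Yp \<beta> :: nat \<Rightarrow> nat \<Rightarrow> 'k)(i := (\<lambda>t. Yp \<beta> i t + Yp \<beta>' i t))) x (j ! x)) = (\<Prod>x\<in>{..<l}-{i}. Yp \<beta> x (j ! x))"
    by (rule prod.cong) auto
  show "segre_point l (Yp \<beta> :: nat \<Rightarrow> nat \<Rightarrow> 'k) j + segre_point l (Yp \<beta>') j =
          segre_point l ((Yp \<beta>)(i := (\<lambda>t. Yp \<beta> i t + Yp \<beta>' i t))) j"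
    apply (simp only: sp_rem[OF assms(1), of "Yp \<beta>"] sp_rem[OF assms(1), of "Yp \<beta>'"]
      sp_rem[OF assms(1), of "(Yp \<beta>)(i := (\<lambda>t. Yp \<beta> i t + Yp \<beta>' i t))"] p q fun_upd_same)
    by (metis distrib_right)
qed


definition rk1 :: "nat \<Rightarrow> nat \<Rightarrow> (nat \<Rightarrow> nat \<Rightarrow> 'k::comm_ring_1) \<Rightarrow> bool" where
  "rk1 r s M \<longleftrightarrow> (\<forall>a b c d. a < b \<longrightarrow> b < r \<longrightarrow> c < d \<longrightarrow> d < s \<longrightarrow> M a c * M b d - M a d * M b c = 0)"

lemma rk1_all:
  assumes "rk1 r s M" "a < r" "b < r" "c < s" "d < s"
  shows "M a c * M b d = M a d * M b c"
proof -
  have H: "\<And>a b c d. a < b \<Longrightarrow> b < r \<Longrightarrow> c < d \<Longrightarrow> d < s \<Longrightarrow> M a c * M b d = M a d * M b c"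
    using assms(1) unfolding rk1_def by auto
  have H2: "\<And>a b c d. a < b \<Longrightarrow> b < r \<Longrightarrow> c < s \<Longrightarrow> d < s \<Longrightarrow> M a c * M b d = M a d * M b c"
  proof -
    fix a b c d assume h: "a < b" "b < r" "c < s" "d < s"
    consider "c < d" | "c = d" | "d < c" by linarith
    then show "M a c * M b d = M a d * M b c"
    proof cases
      case 1 then show ?thesis using H h by blast
    next
      case 2 then show ?thesis by simp
    next
      case 3 then show ?thesis using H[of a b d c] h by simp
    qed
  qed
  consider "a < b" | "a = b" | "b < a" by linarith
  then show ?thesis
  proof cases
    case 1 then show ?thesis using H2 assms by blast
  next
    case 2 then show ?thesis by (simp add: mult.commute)
  next
    case 3 then have "M b c * M a d = M b d * M a c" using H2 assms by blast
    then show ?thesis by (metis mult.commute)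
  qed
qed

lemma rk1_cong: "rk1 r s M \<Longrightarrow> (\<And>a b. a < r \<Longrightarrow> b < s \<Longrightarrow> M a b = N a b) \<Longrightarrow> rk1 r s N"
  unfolding rk1_def
proof (intro allI impI)
  fix a b c d
  assume R: "\<forall>a b c d. a < b \<longrightarrow> b < r \<longrightarrow> c < d \<longrightarrow> d < s \<longrightarrow> M a c * M b d - M a d * M b c = 0"
    and E: "\<And>a b. a < r \<Longrightarrow> b < s \<Longrightarrow> M a b = N a b"
    and h: "a < b" "b < r" "c < d" "d < s"
  have "a < r" "c < s" using h by auto
  then have "M a c = N a c" "M b d = N b d" "M a d = N a d" "M b c = N b c" using E h by auto
  moreover have "M a c * M b d - M a d * M b c = 0" using R h by blast
  ultimately show "N a c * N b d - N a d * N b c = 0" by simp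
qed

lemma rk1_outer:
  fixes M :: "nat \<Rightarrow> nat \<Rightarrow> 'k::field"
  assumes "rk1 r s M"
  shows "\<exists>u \<alpha>. \<forall>a<r. \<forall>b<s. M a b = u a * \<alpha> b"
proof (cases "\<exists>p<r. \<exists>q<s. M p q \<noteq> 0")
  case True
  then obtain p q where pq: "p < r" "q < s" "M p q \<noteq> 0" by blast
  show ?thesis
  proof (intro exI allI impI)
    fix a b assume ab: "a < r" "b < s"
    have "M a b * M p q = M a q * M p b" using rk1_all[OF assms ab(1) pq(1) ab(2) pq(2)] .
    then show "M a b = M a q * (M p b / M p q)" using pq(3) by (simp add: field_simps)
  qed
next
  case False
  then show ?thesis by (intro exI[of _ "\<lambda>_. 0"]) auto
qed

definition par :: "nat \<Rightarrow> (nat \<Rightarrow> 'k::comm_ring_1) \<Rightarrow> (nat \<Rightarrow> 'k) \<Rightarrow> bool" where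
  "par n u v \<longleftrightarrow> (\<forall>i<n. \<forall>j<n. u i * v j = u j * v i)"

lemma cross_id:
  fixes ua ub va vb ac ad bc bd :: "'k::comm_ring_1"
  shows "(ua * ac + va * bc) * (ub * ad + vb * bd) - (ua * ad + va * bd) * (ub * ac + vb * bc)
    = (ua * vb - ub * va) * (ac * bd - ad * bc)"
  by (simp add: algebra_simps)

lemma sum_rk1:
  fixes M N :: "nat \<Rightarrow> nat \<Rightarrow> 'k::field"
  assumes M: "\<forall>a<r. \<forall>b<s. M a b = u a * \<alpha> b" and N: "\<forall>a<r. \<forall>b<s. N a b = v a * \<beta> b"
  shows "rk1 r s (\<lambda>a b. M a b + N a b) \<longleftrightarrow> par r u v \<or> par s \<alpha> \<beta>"
proof
  assume R: "rk1 r s (\<lambda>a b. M a b + N a b)"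
  show "par r u v \<or> par s \<alpha> \<beta>"
  proof (rule ccontr)
    assume "\<not> (par r u v \<or> par s \<alpha> \<beta>)"
    then obtain i j c d where ij: "i < r" "j < r" "u i * v j \<noteq> u j * v i"
      and cd: "c < s" "d < s" "\<alpha> c * \<beta> d \<noteq> \<alpha> d * \<beta> c"
      unfolding par_def by blast
    have "(M i c + N i c) * (M j d + N j d) = (M i d + N i d) * (M j c + N j c)"
      using rk1_all[OF R ij(1) ij(2) cd(1) cd(2)] by simp
    then have "(u i * \<alpha> c + v i * \<beta> c) * (u j * \<alpha> d + v j * \<beta> d) - (u i * \<alpha> d + v i * \<beta> d) * (u j * \<alpha> c + v j * \<beta> c) = 0"
      using M N ij cd by simp
    then have "(u i * v j - u j * v i) * (\<alpha> c * \<beta> d - \<alpha> d * \<beta> c) = 0" by (simp only: cross_id)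
    then show False using ij(3) cd(3) by simp
  qed
next
  assume P: "par r u v \<or> par s \<alpha> \<beta>"
  show "rk1 r s (\<lambda>a b. M a b + N a b)"
    unfolding rk1_def
  proof (intro allI impI)
    fix a b c d assume h: "a < b" "b < r" "c < d" "d < s"
    have "(M a c + N a c) * (M b d + N b d) - (M a d + N a d) * (M b c + N b c) =
      (u a * \<alpha> c + v a * \<beta> c) * (u b * \<alpha> d + v b * \<beta> d) - (u a * \<alpha> d + v a * \<beta> d) * (u b * \<alpha> c + v b * \<beta> c)"
      using M N h by simp
    also have "\<dots> = (u a * v b - u b * v a) * (\<alpha> c * \<beta> d - \<alpha> d * \<beta> c)" by (rule cross_id)
    also have "\<dots> = 0"
    proof -
      have "a < r" "c < s" using h by auto
      then have "u a * v b = u b * v a \<or> \<alpha> c * \<beta> d = \<alpha> d * \<beta> c"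
        using P h unfolding par_def by blast
      then show ?thesis by (elim disjE) simp_all
    qed
    finally show "(M a c + N a c) * (M b d + N b d) - (M a d + N a d) * (M b c + N b c) = 0" .
  qed
qed

lemma par_sym: "par n u v \<Longrightarrow> par n v u"
  unfolding par_def by (simp add: mult.commute)

lemma nonpar_nz: "\<not> par n u v \<Longrightarrow> (\<exists>p<n. u p \<noteq> 0) \<and> (\<exists>p<n. v p \<noteq> 0)"
  unfolding par_def by auto (metis mult_zero_left mult_zero_right)+

lemma par_trans:
  fixes u v w :: "nat \<Rightarrow> 'k::field"
  assumes uv: "par n u v" and vw: "par n v w" and nz: "\<exists>p<n. v p \<noteq> 0"
  shows "par n u w"
  unfolding par_def
proof (intro allI impI)
  fix i j assume ij: "i < n" "j < n"
  obtain p where p: "p < n" "v p \<noteq> 0" using nz by blast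
  have e1: "u i * v p = u p * v i" "u j * v p = u p * v j" using uv p ij unfolding par_def by blast+
  have e2: "v p * w i = v i * w p" "v p * w j = v j * w p" using vw p ij unfolding par_def by blast+
  have "v p * v p * (u i * w j) = (u i * v p) * (v p * w j)" by (simp add: mult_ac)
  also have "\<dots> = (u p * v i) * (v j * w p)" by (simp only: e1 e2)
  also have "\<dots> = (u p * v j) * (v i * w p)" by (simp add: mult_ac)
  also have "\<dots> = (u j * v p) * (v p * w i)" by (simp only: e1 e2)
  also have "\<dots> = v p * v p * (u j * w i)" by (simp add: mult_ac)
  finally show "u i * w j = u j * w i" using p(2) by simp
qed

lemma comb:
  assumes symP: "\<And>x y. P x y \<Longrightarrow> P y x" and transP: "\<And>x y z. P x y \<Longrightarrow> P y z \<Longrightarrow> NP y \<Longrightarrow> P x z"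
    and nzP: "\<And>x y. \<not> P x y \<Longrightarrow> NP x \<and> NP y"
    and symQ: "\<And>x y. Q x y \<Longrightarrow> Q y x" and transQ: "\<And>x y z. Q x y \<Longrightarrow> Q y z \<Longrightarrow> NQ y \<Longrightarrow> Q x z"
    and nzQ: "\<And>x y. \<not> Q x y \<Longrightarrow> NQ x \<and> NQ y"
    and AB: "P cA cB \<or> Q rA rB" and BD: "P cB cD \<or> Q rB rD" and AC: "P cA cC \<or> Q rA rC"
    and CD: "P cC cD \<or> Q rC rD" and AE: "P cA cE \<or> Q rA rE"
    and i1: "\<not> P cA cD" "\<not> Q rA rD" and i2: "\<not> P cB cC" "\<not> Q rB rC"
    and i3: "\<not> P cE cB" "\<not> Q rE rB" and i4: "\<not> P cE cC" "\<not> Q rE rC"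
  shows False
proof -
  have nz: "NP cA" "NP cB" "NP cC" "NP cD" "NP cE" "NQ rA" "NQ rB" "NQ rC" "NQ rD" "NQ rE"
    using nzP[OF i1(1)] nzP[OF i2(1)] nzP[OF i3(1)] nzQ[OF i1(2)] nzQ[OF i2(2)] nzQ[OF i3(2)] by auto
  have c1: "(P cA cB \<and> Q rB rD) \<or> (Q rA rB \<and> P cB cD)"
    using AB BD transP[of cA cB cD] transQ[of rA rB rD] nz i1 by blast
  have c2: "(P cA cC \<and> Q rC rD) \<or> (Q rA rC \<and> P cC cD)"
    using AC CD transP[of cA cC cD] transQ[of rA rC rD] nz i1 by blast
  show False
  proof (cases "P cA cB")
    case True
    then have "\<not> P cA cC" using i2 symP[of cA cB] transP[of cB cA cC] nz by blast
    then have qAC: "Q rA rC" using c2 by blast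
    show False using AE True qAC i3 i4 symP[of cA cE] transP[of cE cA cB] symQ[of rA rE]
        transQ[of rE rA rC] nz by blast
  next
    case False
    then have qAB: "Q rA rB" "P cB cD" using c1 by auto
    then have "\<not> Q rA rC" using i2 symQ[of rA rB] transQ[of rB rA rC] nz by blast
    then have pAC: "P cA cC" using c2 by blast
    show False using AE pAC qAB i3 i4 symP[of cA cE] transP[of cE cA cC] symQ[of rA rE]
        transQ[of rE rA rB] nz by blast
  qed
qed


definition bv :: "nat \<Rightarrow> nat \<Rightarrow> nat \<Rightarrow> nat \<Rightarrow> nat" where
  "bv b0 b1 b2 i = (if i = 0 then b0 else if i = 1 then b1 else if i = 2 then b2 else 0)"

lemma P_val:
  assumes "l = Suc (Suc (Suc l'))"
  shows "segre_point l (Yp (bv b0 b1 b2) :: nat \<Rightarrow> nat \<Rightarrow> 'k::comm_ring_1) (c0 # c1 # c2 # replicate l' 0)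
     = (if b0 = c0 \<and> b1 = c1 \<and> b2 = c2 then 1 else 0)"
  unfolding sp_idx[OF assms] by (simp add: Yp_def bv_def)

lemma idx_in:
  assumes "l = Suc (Suc (Suc l'))" "\<forall>i<l. n i \<ge> 1" "c0 \<le> 1" "c1 \<le> 1" "c2 \<le> 1"
  shows "(c0 # c1 # c2 # replicate l' 0) \<in> segre_index l n"
  unfolding segre_index_def
proof (intro CollectI conjI allI impI)
  show "length (c0 # c1 # c2 # replicate l' 0) = l" using assms(1) by simp
next
  fix i assume i: "i < l"
  have nn: "n 0 \<ge> 1" "n 1 \<ge> 1" "n 2 \<ge> 1" using assms(1,2) by auto
  show "(c0 # c1 # c2 # replicate l' 0) ! i \<le> n i"
  proof (cases i)
    case 0 then show ?thesis using nn assms(3) by simp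
  next
    case (Suc i1) note i1 = this
    show ?thesis
    proof (cases i1)
      case 0 then show ?thesis using nn assms(4) i1 by simp
    next
      case (Suc i2) note i2 = this
      show ?thesis
      proof (cases i2)
        case 0 then show ?thesis using nn assms(5) i1 i2 by (simp add: numeral_2_eq_2)
      next
        case (Suc i3) then show ?thesis using i1 i2 i assms(1) by simp
      qed
    qed
  qed
qed

definition quad :: "nat list \<Rightarrow> nat list \<Rightarrow> nat list \<Rightarrow> nat list \<Rightarrow> 'k::comm_ring_1 mpoly" where
  "quad j1 j2 k1 k2 = Xv j1 * Xv j2 - Xv k1 * Xv k2"

lemma ev_quad: "mpoly_eval a (quad j1 j2 k1 k2) = a j1 * a j2 - a k1 * a k2"
  by (simp add: quad_def ev_diff ev_mult)

lemma quad_vars: "j1 \<in> J \<Longrightarrow> j2 \<in> J \<Longrightarrow> k1 \<in> J \<Longrightarrow> k2 \<in> J \<Longrightarrow> vars_in J (quad j1 j2 k1 k2 :: 'k::comm_ring_1 mpoly)"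
  unfolding quad_def by (intro vars_in_diff vars_in_mult vars_in_Xv)

theorem proposition4p2:
  fixes l :: nat and n :: "nat \<Rightarrow> nat"
  assumes alg_closed: "\<forall>p :: 'k::field_char_0 poly. degree p > 0 \<longrightarrow> (\<exists>x. poly p x = 0)"
    and "l \<ge> 3"
    and "\<forall>i<l. n i \<ge> 1"
  shows "\<not> (\<exists>r s (\<Omega> :: nat \<Rightarrow> nat \<Rightarrow> 'k mpoly). determinantal_presentation l n r s \<Omega>)"
proof
  assume "\<exists>r s (\<Omega> :: nat \<Rightarrow> nat \<Rightarrow> 'k mpoly). determinantal_presentation l n r s \<Omega>"
  then obtain r s and \<Omega> :: "nat \<Rightarrow> nat \<Rightarrow> 'k mpoly" where DP: "determinantal_presentation l n r s \<Omega>"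
    by blast
  have lin: "\<And>a b. a < r \<Longrightarrow> b < s \<Longrightarrow> is_linear_form (segre_index l n) (\<Omega> a b)"
    using DP unfolding determinantal_presentation_def by blast
  have gen: "gen_ideal {p. vars_in (segre_index l n) p} (minors2 r s \<Omega>) = segre_ideal l n"
    using DP unfolding determinantal_presentation_def by blast
  define l' where "l' = l - 3"
  have l: "l = Suc (Suc (Suc l'))" using assms(2) unfolding l'_def by simp
  define MM where "MM z = (\<lambda>a b. mpoly_eval z (\<Omega> a b))" for z :: "nat list \<Rightarrow> 'k"
  have lin_pt: "MM (\<lambda>j. z1 j + z2 j) a b = MM z1 a b + MM z2 a b" if "a < r" "b < s" for z1 z2 a b
    unfolding MM_def using ev_linear[OF lin[OF that]] .
  have minor_eval: "mpoly_eval z g = 0" if gm0: "g \<in> minors2 r s \<Omega>" and rk0: "rk1 r s (MM z)" for z g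
  proof -
    obtain a b c d where g: "g = \<Omega> a c * \<Omega> b d - \<Omega> a d * \<Omega> b c" "a < b" "b < r" "c < d" "d < s"
      using gm0 unfolding minors2_def by blast
    have "mpoly_eval z g = MM z a c * MM z b d - MM z a d * MM z b c"
      unfolding g(1) MM_def by (simp add: ev_diff ev_mult)
    also have "\<dots> = 0" using rk0 g unfolding rk1_def by blast
    finally show ?thesis .
  qed
  have rk_seg: "rk1 r s (MM (segre_point l y))" for y
    unfolding rk1_def
  proof (intro allI impI)
    fix a b c d assume h: "a < b" "b < r" "c < d" "d < s"
    let ?g = "\<Omega> a c * \<Omega> b d - \<Omega> a d * \<Omega> b c"
    have gm: "?g \<in> minors2 r s \<Omega>" unfolding minors2_def using h by blast
    have "?g \<in> gen_ideal {p. vars_in (segre_index l n) p} (minors2 r s \<Omega>)"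
      unfolding gen_ideal_def
      by (rule CollectI, rule exI[of _ "{?g}"], rule exI[of _ "\<lambda>_. 1"]) (use gm vars_in_one in auto)
    then have "?g \<in> segre_ideal l n" using gen by simp
    then have "mpoly_eval (segre_point l y) ?g = 0" unfolding segre_ideal_def by blast
    then show "MM (segre_point l y) a c * MM (segre_point l y) b d - MM (segre_point l y) a d * MM (segre_point l y) b c = 0"
      unfolding MM_def by (simp add: ev_diff ev_mult)
  qed
  have contra: False if q: "q \<in> segre_ideal l n" "mpoly_eval z q \<noteq> 0" and R: "rk1 r s (MM z)" for q z
  proof -
    have "q \<in> gen_ideal {p. vars_in (segre_index l n) p} (minors2 r s \<Omega>)" using q gen by simp
    then obtain F c where F: "F \<subseteq> minors2 r s \<Omega>" "q = (\<Sum>g\<in>F. c g * g)"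
      unfolding gen_ideal_def by blast
    have "mpoly_eval z q = (\<Sum>g\<in>F. mpoly_eval z (c g) * mpoly_eval z g)"
      unfolding F(2) by (simp add: ev_sum ev_mult)
    also have "\<dots> = 0" using F(1) minor_eval[OF _ R] by (intro sum.neutral) auto
    finally show False using q(2) by simp
  qed
  define P where "P b0 b1 b2 = (segre_point l (Yp (bv b0 b1 b2)) :: nat list \<Rightarrow> 'k)" for b0 b1 b2
  have compat: "rk1 r s (\<lambda>a b. MM (P b0 b1 b2) a b + MM (P b0' b1' b2') a b)"
    if cpt: "i < l" "\<And>x. x \<noteq> i \<Longrightarrow> bv b0 b1 b2 x = bv b0' b1' b2' x" for i b0 b1 b2 b0' b1' b2'
  proof -
    obtain y where y: "\<forall>j. P b0 b1 b2 j + P b0' b1' b2' j = segre_point l y j"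
      using pt_pair[where i=i and l=l and \<beta>="bv b0 b1 b2" and \<beta>'="bv b0' b1' b2'" and 'k='k, OF cpt] unfolding P_def by blast
    have "(\<lambda>j. P b0 b1 b2 j + P b0' b1' b2' j) = segre_point l y" using y by auto
    then have "rk1 r s (MM (\<lambda>j. P b0 b1 b2 j + P b0' b1' b2' j))" using rk_seg by simp
    then show ?thesis by (rule rk1_cong) (rule lin_pt)
  qed
  have incompat: "\<not> rk1 r s (\<lambda>a b. MM (P b0 b1 b2) a b + MM (P b0' b1' b2') a b)"
    if "q \<in> segre_ideal l n" "mpoly_eval (\<lambda>j. P b0 b1 b2 j + P b0' b1' b2' j) q \<noteq> 0"
    for q b0 b1 b2 b0' b1' b2'
  proof
    assume "rk1 r s (\<lambda>a b. MM (P b0 b1 b2) a b + MM (P b0' b1' b2') a b)"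
    then have "rk1 r s (MM (\<lambda>j. P b0 b1 b2 j + P b0' b1' b2' j))"
      by (rule rk1_cong) (rule lin_pt[symmetric])
    then show False using contra that by blast
  qed
  define I where "I c0 c1 c2 = c0 # c1 # c2 # replicate l' (0::nat)" for c0 c1 c2 :: nat
  have Iin: "I c0 c1 c2 \<in> segre_index l n" if "c0 \<le> 1" "c1 \<le> 1" "c2 \<le> 1" for c0 c1 c2
    unfolding I_def using idx_in[OF l assms(3) that] .
  have Pv: "P b0 b1 b2 (I c0 c1 c2) = (if b0 = c0 \<and> b1 = c1 \<and> b2 = c2 then 1 else 0)" for b0 b1 b2 c0 c1 c2
    unfolding P_def I_def by (rule P_val[OF l])
  have quad_seg: "(quad (I a0 a1 a2) (I b0 b1 b2) (I c0 c1 c2) (I d0 d1 d2) :: 'k mpoly) \<in> segre_ideal l n"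
    if "a0 \<le> 1" "a1 \<le> 1" "a2 \<le> 1" "b0 \<le> 1" "b1 \<le> 1" "b2 \<le> 1"
       "c0 \<le> 1" "c1 \<le> 1" "c2 \<le> 1" "d0 \<le> 1" "d1 \<le> 1" "d2 \<le> 1"
       "(a0 = c0 \<and> b0 = d0) \<or> (a0 = d0 \<and> b0 = c0)"
       "(a1 = c1 \<and> b1 = d1) \<or> (a1 = d1 \<and> b1 = c1)"
       "(a2 = c2 \<and> b2 = d2) \<or> (a2 = d2 \<and> b2 = c2)"
    for a0 a1 a2 b0 b1 b2 c0 c1 c2 d0 d1 d2
    unfolding segre_ideal_def
  proof (intro CollectI conjI allI)
    show "vars_in (segre_index l n) (quad (I a0 a1 a2) (I b0 b1 b2) (I c0 c1 c2) (I d0 d1 d2) :: 'k mpoly)"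
      using that by (intro quad_vars Iin)
  next
    fix y :: "nat \<Rightarrow> nat \<Rightarrow> 'k"
    define R where "R = (\<Prod>i<l'. y (Suc (Suc (Suc i))) 0)"
    have sp: "segre_point l y (I e0 e1 e2) = y 0 e0 * y 1 e1 * y 2 e2 * R" for e0 e1 e2
      unfolding I_def R_def by (rule sp_idx[OF l])
    have e0: "y 0 a0 * y 0 b0 = y 0 c0 * y 0 d0" using that(13) by (auto simp: mult.commute)
    have e1: "y 1 a1 * y 1 b1 = y 1 c1 * y 1 d1" using that(14) by (auto simp: mult.commute)
    have e2: "y 2 a2 * y 2 b2 = y 2 c2 * y 2 d2" using that(15) by (auto simp: mult.commute)
    have "y 0 a0 * y 1 a1 * y 2 a2 * R * (y 0 b0 * y 1 b1 * y 2 b2 * R) =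
          (y 0 a0 * y 0 b0) * (y 1 a1 * y 1 b1) * (y 2 a2 * y 2 b2) * (R * R)" by (simp add: mult_ac)
    also have "\<dots> = (y 0 c0 * y 0 d0) * (y 1 c1 * y 1 d1) * (y 2 c2 * y 2 d2) * (R * R)"
      by (simp only: e0 e1 e2)
    also have "\<dots> = y 0 c0 * y 1 c1 * y 2 c2 * R * (y 0 d0 * y 1 d1 * y 2 d2 * R)" by (simp add: mult_ac)
    finally show "mpoly_eval (segre_point l y) (quad (I a0 a1 a2) (I b0 b1 b2) (I c0 c1 c2) (I d0 d1 d2)) = 0"
      unfolding ev_quad sp by simp
  qed
  define q1 where "q1 = (quad (I 0 0 0) (I 1 1 0) (I 1 0 0) (I 0 1 0) :: 'k mpoly)"
  define q2 where "q2 = (quad (I 0 0 1) (I 1 0 0) (I 0 0 0) (I 1 0 1) :: 'k mpoly)"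
  define q3 where "q3 = (quad (I 0 0 1) (I 0 1 0) (I 0 0 0) (I 0 1 1) :: 'k mpoly)"
  have q1s: "q1 \<in> segre_ideal l n" unfolding q1_def by (rule quad_seg) auto
  have q2s: "q2 \<in> segre_ideal l n" unfolding q2_def by (rule quad_seg) auto
  have q3s: "q3 \<in> segre_ideal l n" unfolding q3_def by (rule quad_seg) auto
  have nAD: "\<not> rk1 r s (\<lambda>a b. MM (P 0 0 0) a b + MM (P 1 1 0) a b)"
    by (rule incompat[OF q1s]) (simp add: q1_def ev_quad Pv)
  have nBC: "\<not> rk1 r s (\<lambda>a b. MM (P 1 0 0) a b + MM (P 0 1 0) a b)"
    by (rule incompat[OF q1s]) (simp add: q1_def ev_quad Pv)
  have nEB: "\<not> rk1 r s (\<lambda>a b. MM (P 0 0 1) a b + MM (P 1 0 0) a b)"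
    by (rule incompat[OF q2s]) (simp add: q2_def ev_quad Pv)
  have nEC: "\<not> rk1 r s (\<lambda>a b. MM (P 0 0 1) a b + MM (P 0 1 0) a b)"
    by (rule incompat[OF q3s]) (simp add: q3_def ev_quad Pv)
  have i0: "0 < l" and i1: "1 < l" and i2: "2 < l" using l by auto
  have cAB: "rk1 r s (\<lambda>a b. MM (P 0 0 0) a b + MM (P 1 0 0) a b)"
    by (rule compat[OF i0]) (simp add: bv_def)
  have cBD: "rk1 r s (\<lambda>a b. MM (P 1 0 0) a b + MM (P 1 1 0) a b)"
    by (rule compat[OF i1]) (simp add: bv_def)
  have cAC: "rk1 r s (\<lambda>a b. MM (P 0 0 0) a b + MM (P 0 1 0) a b)"
    by (rule compat[OF i1]) (simp add: bv_def)
  have cCD: "rk1 r s (\<lambda>a b. MM (P 0 1 0) a b + MM (P 1 1 0) a b)"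
    by (rule compat[OF i0]) (simp add: bv_def)
  have cAE: "rk1 r s (\<lambda>a b. MM (P 0 0 0) a b + MM (P 0 0 1) a b)"
    by (rule compat[OF i2]) (simp add: bv_def)
  obtain uA aA where A: "\<forall>a<r. \<forall>b<s. MM (P 0 0 0) a b = uA a * aA b" using rk1_outer[OF rk_seg] unfolding P_def by blast
  obtain uB aB where B: "\<forall>a<r. \<forall>b<s. MM (P 1 0 0) a b = uB a * aB b" using rk1_outer[OF rk_seg] unfolding P_def by blast
  obtain uC aC where C: "\<forall>a<r. \<forall>b<s. MM (P 0 1 0) a b = uC a * aC b" using rk1_outer[OF rk_seg] unfolding P_def by blast
  obtain uD aD where D: "\<forall>a<r. \<forall>b<s. MM (P 1 1 0) a b = uD a * aD b" using rk1_outer[OF rk_seg] unfolding P_def by blast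
  obtain uE aE where E: "\<forall>a<r. \<forall>b<s. MM (P 0 0 1) a b = uE a * aE b" using rk1_outer[OF rk_seg] unfolding P_def by blast
  show False
  proof (rule comb[where P = "par r" and Q = "par s" and NP = "\<lambda>u. \<exists>p<r. u p \<noteq> 0"
        and NQ = "\<lambda>u. \<exists>p<s. u p \<noteq> 0" and cA = uA and cB = uB and cC = uC and cD = uD and cE = uE
        and rA = aA and rB = aB and rC = aC and rD = aD and rE = aE])
    show "\<And>x y. par r x y \<Longrightarrow> par r y x" by (rule par_sym)
    show "\<And>x y. par s x y \<Longrightarrow> par s y x" by (rule par_sym)
    show "\<And>x y z. par r x y \<Longrightarrow> par r y z \<Longrightarrow> \<exists>p<r. y p \<noteq> (0::'k) \<Longrightarrow> par r x z" by (rule par_trans)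
    show "\<And>x y z. par s x y \<Longrightarrow> par s y z \<Longrightarrow> \<exists>p<s. y p \<noteq> (0::'k) \<Longrightarrow> par s x z" by (rule par_trans)
    show "\<And>x y. \<not> par r x y \<Longrightarrow> (\<exists>p<r. x p \<noteq> (0::'k)) \<and> (\<exists>p<r. y p \<noteq> 0)" by (rule nonpar_nz)
    show "\<And>x y. \<not> par s x y \<Longrightarrow> (\<exists>p<s. x p \<noteq> (0::'k)) \<and> (\<exists>p<s. y p \<noteq> 0)" by (rule nonpar_nz)
    show "par r uA uB \<or> par s aA aB" using cAB sum_rk1[OF A B] by blast
    show "par r uB uD \<or> par s aB aD" using cBD sum_rk1[OF B D] by blast
    show "par r uA uC \<or> par s aA aC" using cAC sum_rk1[OF A C] by blast
    show "par r uC uD \<or> par s aC aD" using cCD sum_rk1[OF C D] by blast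
    show "par r uA uE \<or> par s aA aE" using cAE sum_rk1[OF A E] by blast
    show "\<not> par r uA uD" "\<not> par s aA aD" using nAD sum_rk1[OF A D] by blast+
    show "\<not> par r uB uC" "\<not> par s aB aC" using nBC sum_rk1[OF B C] by blast+
    show "\<not> par r uE uB" "\<not> par s aE aB" using nEB sum_rk1[OF E B] by blast+
    show "\<not> par r uE uC" "\<not> par s aE aC" using nEC sum_rk1[OF E C] by blast+
  qed
qed

end
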